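(* Let $\tau=(\tau_1,\dots,\tau_\ell)$ be a tuple of positive integers, $0\le k\le\ell$, and $\hat P_\tau=C\sqcup O$ the $k$-decomposition. Let $p_i,p'_i\in Y^i$ for $1\le i\le k$ and $a,a'\in Y^{k+1}$, and put $p_{k+1}=a$, $p'_{k+1}=a'$. Let $F$ be the face of $\mathcal{O}_{C,O}(\tau)$ on which both chain inequalities $x_{p_1}+\dots+x_{p_k}\le x_a$ and $x_{p'_1}+\dots+x_{p'_k}\le x_{a'}$ hold with equality. Let $I=\{i\in\{1,\dots,k+1\}: p_i\neq p'_i\}$ and define $\tau'=(\tau'_1,\dots,\tau'_\ell)$ by $\tau'_j=\tau_j-1$ if $j\in I$ and $\tau'_j=\tau_j$ otherwise. Identify $\hat P_{\tau'}$ with the induced subposet $\hat P_\tau\setminus\{p'_i: i\in I\}$ and let $\hat P_{\tau'}=C''\sqcup O''$ be its $k$-decomposition. Let $F'$ be the face of $\mathcal{O}_{C'',O''}(\tau')$ on which the chain inequality $x_{p_1}+\dots+x_{p_k}\le x_a$ holds with equality. Then the coordinate projection forgetting the coordinates $x_{p'_i}$, $i\in I$, is an affine isomorphism $\nu:F\to F'$. Moreover, each coordinate projected away contributes exactly one to the codimension: the codimension of $F$ in $\mathcal{O}_{C,O}(\tau)$ equals the codimension of $F'$ in $\mathcal{O}_{C'',O''}(\tau')$ plus $|I|$.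
   Context: The poset $P_\tau$ has elements $y^i_j$ ($1\le i\le\ell$, $1\le j\le\tau_i$) with $y^i_j<y^{i'}_{j'}$ iff $i<i'$; $Y^i=\{y^i_1,\dots,y^i_{\tau_i}\}$; $|\tau|=\sum_i\tau_i$. $\hat P_\tau=P_\tau\cup\{\hat0,\hat1\}$ with new minimum $\hat0$ and maximum $\hat1$, $Y^0=\{\hat0\}$, $Y^{\ell+1}=\{\hat1\}$; $\prec$ is the covering relation. For $0\le k\le\ell$ the $k$-decomposition is $C=Y^0\cup\dots\cup Y^k$, $O=Y^{k+1}\cup\dots\cup Y^{\ell+1}$. The chain-order polytope $\mathcal{O}_{C,O}(\tau)\subseteq\mathbb{R}^{\hat P_\tau}$ consists of all $x$ with $x_{\hat0}=0$, $x_{\hat1}=1$, $x_p\ge0$ for $p\in C$, $x_a\le x_b$ for $a,b\in O$ with $a\prec b$, and $x_{p_1}+\dots+x_{p_k}\le x_q$ for all $p_i\in Y^i$ ($1\le i\le k$), $q\in Y^{k+1}$ (chain inequalities). The same definitions apply to any tuple of positive integers in place of $\tau$. The codimension of a face $F$ of $\mathcal{O}_{C,O}(\tau)$ is $|\tau|-\dim F$. *)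

theory Defs
  imports "HOL-Analysis.Analysis" "HOL-Library.Function_Algebras"
begin

text \<open>Pointwise real vector space structure on real-valued functions, so that the
  library notions (affine dependence, linear maps) apply to points of R^P.\<close>

instantiation "fun" :: (type, real_vector) real_vector
begin
definition scaleR_fun :: "real \<Rightarrow> ('a \<Rightarrow> 'b) \<Rightarrow> 'a \<Rightarrow> 'b"
  where "scaleR_fun r f = (\<lambda>x. r *\<^sub>R f x)"
instance
  by standard (auto simp: scaleR_fun_def plus_fun_def scaleR_add_right scaleR_add_left)
end

definition faff_dim :: "('a \<Rightarrow> real) set \<Rightarrow> int" where
  "faff_dim S = (if S = {} then -1 else
     Sup {int (card B) - 1 | B. B \<subseteq> S \<and> finite B \<and> \<not> affine_dependent B})"

text \<open>The levels Y^0, ..., Y^(l+1) of hat P_tau, for tau a list of length l.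
  y^i_j is encoded as (i,j); hat0 = (0,0), hat1 = (l+1,0).\<close>

definition tauY :: "nat list \<Rightarrow> nat \<Rightarrow> (nat \<times> nat) set" where
  "tauY \<tau> i = (if i = 0 then {(0,0)}
     else if i \<le> length \<tau> then {i} \<times> {1..\<tau> ! (i - 1)}
     else if i = length \<tau> + 1 then {(i,0)} else {})"

text \<open>Chain-order polytope O_{C,O} for the k-decomposition of a graded poset whose
  levels are Y 0, ..., Y (l+1) (with Y 0 = {hat0}, Y (l+1) = {hat1}, and p < q iff
  level(p) < level(q)); the covering relation relates consecutive levels.
  Points are functions vanishing outside the ground set (i.e. elements of R^P).\<close>

definition COP :: "(nat \<Rightarrow> 'a set) \<Rightarrow> nat \<Rightarrow> nat \<Rightarrow> ('a \<Rightarrow> real) set" where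
  "COP Y l k = {x.
     (\<forall>q. q \<notin> (\<Union>i\<le>l+1. Y i) \<longrightarrow> x q = 0) \<and>
     (\<forall>q\<in>Y 0. x q = 0) \<and>
     (\<forall>q\<in>Y (l+1). x q = 1) \<and>
     (\<forall>i\<le>k. \<forall>q\<in>Y i. 0 \<le> x q) \<and>
     (\<forall>i. k + 1 \<le> i \<and> i \<le> l \<longrightarrow> (\<forall>a\<in>Y i. \<forall>b\<in>Y (i+1). x a \<le> x b)) \<and>
     (\<forall>p q. (\<forall>i\<in>{1..k}. p i \<in> Y i) \<and> q \<in> Y (k+1) \<longrightarrow> (\<Sum>i=1..k. x (p i)) \<le> x q)}"

end

theory Submission imports Defs begin

lemma dep_image:
  fixes g :: "'a::real_vector \<Rightarrow> 'b::real_vector"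
  assumes "linear g" "finite S" "inj_on g S" "affine_dependent S"
  shows "affine_dependent (g ` S)"
proof -
  obtain U v where U: "sum U S = 0" "v\<in>S" "U v \<noteq> 0" "(\<Sum>v\<in>S. U v *\<^sub>R v) = 0"
    using assms(4) affine_dependent_explicit_finite[OF assms(2)] by auto
  define U' where "U' = U \<circ> the_inv_into S g"
  have fin: "finite (g ` S)" using assms(2) by simp
  have inv: "\<And>x. x \<in> S \<Longrightarrow> the_inv_into S g (g x) = x"
    using assms(3) the_inv_into_f_f by metis
  have "sum U' (g ` S) = sum U S"
    using assms(3) by (simp add: sum.reindex U'_def inv cong: sum.cong)
  moreover have "(\<Sum>w\<in>g ` S. U' w *\<^sub>R w) = g (\<Sum>v\<in>S. U v *\<^sub>R v)"
    using assms(3) by (simp add: sum.reindex U'_def inv linear_sum[OF assms(1)] linear_scale[OF assms(1)] cong: sum.cong)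
  ultimately show ?thesis
    unfolding affine_dependent_explicit_finite[OF fin]
    using U assms(1) inv by (intro exI[of _ U']) (auto simp: U'_def linear_0 intro!: bexI[of _ v])
qed

lemma faff_le:
  fixes f g :: "('a \<Rightarrow> real) \<Rightarrow> ('a \<Rightarrow> real)"
  assumes "linear f" "linear g" "f ` S \<subseteq> T" "\<forall>x\<in>S. g (f x) = x"
  shows "{int (card B) - 1 | B. B \<subseteq> S \<and> finite B \<and> \<not> affine_dependent B}
       \<subseteq> {int (card B) - 1 | B. B \<subseteq> T \<and> finite B \<and> \<not> affine_dependent B}"
proof
  fix z assume "z \<in> {int (card B) - 1 | B. B \<subseteq> S \<and> finite B \<and> \<not> affine_dependent B}"
  then obtain B where B: "z = int (card B) - 1" "B \<subseteq> S" "finite B" "\<not> affine_dependent B" by auto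
  have inj: "inj_on f B" using B(2) assms(4) by (metis inj_on_inverseI subset_iff)
  have gf: "g ` f ` B = B" using B(2) assms(4) by (force simp: image_image)
  have injg: "inj_on g (f ` B)" using B(2) assms(4) by (auto simp: inj_on_def subset_iff)
  have "\<not> affine_dependent (f ` B)"
    using dep_image[OF assms(2) _ injg] B gf by auto
  moreover have "card (f ` B) = card B" using card_image[OF inj] .
  ultimately show "z \<in> {int (card B) - 1 | B. B \<subseteq> T \<and> finite B \<and> \<not> affine_dependent B}"
    using B assms(3) by (auto intro!: exI[of _ "f ` B"])
qed

lemma faff_eq:
  fixes f g :: "('a \<Rightarrow> real) \<Rightarrow> ('a \<Rightarrow> real)"
  assumes "linear f" "linear g" "f ` S \<subseteq> T" "g ` T \<subseteq> S" "\<forall>x\<in>S. g (f x) = x" "\<forall>y\<in>T. f (g y) = y"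
  shows "faff_dim S = faff_dim T"
proof -
  have "S = {} \<longleftrightarrow> T = {}" using assms(3,4) by auto
  moreover have "{int (card B) - 1 | B. B \<subseteq> S \<and> finite B \<and> \<not> affine_dependent B}
       = {int (card B) - 1 | B. B \<subseteq> T \<and> finite B \<and> \<not> affine_dependent B}"
    using faff_le[OF assms(1,2,3,5)] faff_le[OF assms(2,1,4,6)] by blast
  ultimately show ?thesis unfolding faff_dim_def by simp
qed

lemma tauY_fst: "q \<in> tauY \<tau> i \<Longrightarrow> fst q = i"
  by (auto simp: tauY_def split: if_splits)

lemma sum_upd:
  fixes h :: "'b \<Rightarrow> real"
  assumes "finite A" "i \<in> A"
  shows "(\<Sum>j\<in>A. h ((p(i:=c)) j)) = (\<Sum>j\<in>A. h (p j)) - h (p i) + h c"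
proof -
  have "(\<Sum>j\<in>A. h ((p(i:=c)) j)) = h c + (\<Sum>j\<in>A-{i}. h ((p(i:=c)) j))"
    using sum.remove[OF assms, of "\<lambda>j. h ((p(i:=c)) j)"] by simp
  also have "(\<Sum>j\<in>A-{i}. h ((p(i:=c)) j)) = (\<Sum>j\<in>A-{i}. h (p j))"
    by (rule sum.cong) auto
  also have "\<dots> = (\<Sum>j\<in>A. h (p j)) - h (p i)"
    using sum.remove[OF assms, of "\<lambda>j. h (p j)"] by simp
  finally show ?thesis by simp
qed

theorem proposition3p7:
  fixes \<tau> :: "nat list" and k :: nat and p p' :: "nat \<Rightarrow> nat \<times> nat"
  assumes pos: "\<forall>t\<in>set \<tau>. 0 < t"
    and k: "k \<le> length \<tau>"
    and pY: "\<forall>i\<in>{1..k+1}. p i \<in> tauY \<tau> i \<and> p' i \<in> tauY \<tau> i"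
  defines "I \<equiv> {i\<in>{1..k+1}. p i \<noteq> p' i}"
  defines "\<tau>' \<equiv> map (\<lambda>j. if j + 1 \<in> I then \<tau> ! j - 1 else \<tau> ! j) [0..<length \<tau>]"
  defines "Y'' \<equiv> (\<lambda>i. tauY \<tau> i - p' ` I)"
  defines "F \<equiv> {x \<in> COP (tauY \<tau>) (length \<tau>) k.
                 (\<Sum>i=1..k. x (p i)) = x (p (k+1)) \<and> (\<Sum>i=1..k. x (p' i)) = x (p' (k+1))}"
  defines "F' \<equiv> {x \<in> COP Y'' (length \<tau>) k. (\<Sum>i=1..k. x (p i)) = x (p (k+1))}"
  defines "\<nu> \<equiv> (\<lambda>x::nat \<times> nat \<Rightarrow> real. \<lambda>q. if q \<in> p' ` I then 0 else x q)"
  shows "linear \<nu> \<and> bij_betw \<nu> F F' \<and>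
         int (sum_list \<tau>) - faff_dim F = (int (sum_list \<tau>') - faff_dim F') + int (card I)"
proof -
  define l where "l = length \<tau>"
  define Y where "Y = tauY \<tau>"
  define r where "r = (\<lambda>q::nat\<times>nat. if q \<in> p' ` I then p (fst q) else q)"
  define \<mu> where "\<mu> = (\<lambda>y::nat \<times> nat \<Rightarrow> real. \<lambda>q. y (r q))"
  have Y'': "Y'' = (\<lambda>i. Y i - p' ` I)" unfolding Y''_def Y_def ..
  have I1: "I \<subseteq> {1..k+1}" unfolding I_def by auto
  have pYi: "p i \<in> Y i" "p' i \<in> Y i" if "i \<in> {1..k+1}" for i using pY that Y_def by auto
  have fstp: "fst (p i) = i" "fst (p' i) = i" if "i \<in> {1..k+1}" for i
    using pYi[OF that] tauY_fst unfolding Y_def by auto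
  have Yfst: "q \<in> Y i \<Longrightarrow> fst q = i" for q i using tauY_fst Y_def by auto
  have Ylast: "Y (l+1) = {(l+1,0)}" unfolding Y_def l_def tauY_def by simp
  have Y0: "Y 0 = {(0,0)}" unfolding Y_def tauY_def by simp
  have pnot: "p i \<notin> p' ` I" if "i \<in> {1..k+1}" for i
  proof
    assume "p i \<in> p' ` I"
    then obtain j where j: "j \<in> I" "p i = p' j" by auto
    then have "i = j" using fstp[OF that] fstp(2)[of j] I1 by auto
    then show False using j I_def by auto
  qed
  have Il: "I \<subseteq> {1..l}"
  proof
    fix i assume i: "i \<in> I"
    have "i \<noteq> l + 1"
    proof
      assume "i = l + 1"
      then have "p i \<in> Y (l+1)" "p' i \<in> Y (l+1)" using pYi i I1 by auto
      then show False using Ylast i I_def by auto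
    qed
    then show "i \<in> {1..l}" using i I1 k l_def by auto
  qed
  have p'I_Y: "q \<in> p' ` I \<Longrightarrow> q \<in> Y (fst q) \<and> fst q \<in> I" for q
    using pYi fstp I1 by auto
  have R: "r q \<in> Y'' i" if "q \<in> Y i" for q i
  proof (cases "q \<in> p' ` I")
    case True
    then have "fst q \<in> I" using p'I_Y by auto
    moreover have "fst q = i" using Yfst that by auto
    ultimately have "i \<in> {1..k+1}" "r q = p i" using True I1 unfolding r_def by auto
    then show ?thesis using pYi pnot unfolding Y'' by auto
  next
    case False then show ?thesis using that unfolding r_def Y'' by auto
  qed
  have Y''Y: "q \<in> Y'' i \<Longrightarrow> q \<in> Y i \<and> q \<notin> p' ` I" for q i unfolding Y'' by auto
  have A: "x (p' i) = x (p i)" if x: "x \<in> F" and i: "i \<in> I" for x i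
  proof -
    have xC: "x \<in> COP Y l k" and e1: "(\<Sum>i=1..k. x (p i)) = x (p (k+1))"
      and e2: "(\<Sum>i=1..k. x (p' i)) = x (p' (k+1))"
      using x unfolding F_def Y_def l_def by auto
    have chain: "(\<Sum>j=1..k. x (q j)) \<le> x b" if "\<forall>j\<in>{1..k}. q j \<in> Y j" "b \<in> Y (k+1)" for q b
      using xC that unfolding COP_def by blast
    show ?thesis
    proof (cases "i \<le> k")
      case True
      then have iA: "i \<in> {1..k}" using i I1 by auto
      have "(\<Sum>j=1..k. x ((p(i:=p' i)) j)) \<le> x (p (k+1))"
        using chain pYi iA by auto
      then have 1: "x (p' i) \<le> x (p i)" using sum_upd[of "{1..k}" i x p "p' i"] iA e1 by simp
      have "(\<Sum>j=1..k. x ((p'(i:=p i)) j)) \<le> x (p' (k+1))"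
        using chain pYi iA by auto
      then have 2: "x (p i) \<le> x (p' i)" using sum_upd[of "{1..k}" i x p' "p i"] iA e2 by simp
      show ?thesis using 1 2 by simp
    next
      case False
      then have ik: "i = k+1" using i I1 by auto
      have "(\<Sum>j=1..k. x (p j)) \<le> x (p' (k+1))" "(\<Sum>j=1..k. x (p' j)) \<le> x (p (k+1))"
        using chain pYi by auto
      then show ?thesis using e1 e2 ik by simp
    qed
  qed
  have lin\<nu>: "linear \<nu>"
    by (rule linearI) (auto simp: \<nu>_def plus_fun_def scaleR_fun_def)
  have lin\<mu>: "linear \<mu>"
    by (rule linearI) (auto simp: \<mu>_def plus_fun_def scaleR_fun_def)
  have B: "\<nu> x \<in> F'" if x: "x \<in> F" for x
  proof -
    have xC: "x \<in> COP Y l k" and e1: "(\<Sum>i=1..k. x (p i)) = x (p (k+1))"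
      using x unfolding F_def Y_def l_def by auto
    have nv: "\<nu> x q = x q" if "q \<notin> p' ` I" for q using that \<nu>_def by simp
    have c1: "\<forall>q. q \<notin> (\<Union>i\<le>l+1. Y'' i) \<longrightarrow> \<nu> x q = 0"
      using xC unfolding COP_def Y'' \<nu>_def by auto
    have c2: "\<forall>q\<in>Y'' 0. \<nu> x q = 0" using xC Y''Y nv unfolding COP_def by auto
    have c3: "\<forall>q\<in>Y'' (l+1). \<nu> x q = 1" using xC Y''Y nv unfolding COP_def by auto
    have c4: "\<forall>i\<le>k. \<forall>q\<in>Y'' i. 0 \<le> \<nu> x q" using xC Y''Y nv unfolding COP_def by auto
    have c5: "\<forall>i. k + 1 \<le> i \<and> i \<le> l \<longrightarrow> (\<forall>a\<in>Y'' i. \<forall>b\<in>Y'' (i+1). \<nu> x a \<le> \<nu> x b)"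
      using xC Y''Y nv unfolding COP_def by auto
    have c6: "(\<Sum>i=1..k. \<nu> x (q i)) \<le> \<nu> x b"
      if "\<forall>i\<in>{1..k}. q i \<in> Y'' i" "b \<in> Y'' (k+1)" for q b
    proof -
      have "(\<Sum>i=1..k. \<nu> x (q i)) = (\<Sum>i=1..k. x (q i))"
        by (rule sum.cong) (use that Y''Y nv in blast)+
      moreover have "\<nu> x b = x b" using that Y''Y nv by auto
      moreover have "(\<Sum>i=1..k. x (q i)) \<le> x b"
        using xC that Y''Y unfolding COP_def by blast
      ultimately show ?thesis by simp
    qed
    have e: "(\<Sum>i=1..k. \<nu> x (p i)) = \<nu> x (p (k+1))"
    proof -
      have "(\<Sum>i=1..k. \<nu> x (p i)) = (\<Sum>i=1..k. x (p i))"
        by (rule sum.cong) (use pnot nv in auto)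
      moreover have "\<nu> x (p (k+1)) = x (p (k+1))" using pnot nv by auto
      ultimately show ?thesis using e1 by simp
    qed
    show ?thesis unfolding F'_def COP_def l_def[symmetric]
      using c1 c2 c3 c4 c5 c6 e by blast
  qed
  have C: "\<mu> y \<in> F" if y: "y \<in> F'" for y
  proof -
    have yC: "y \<in> COP Y'' l k" and e1: "(\<Sum>i=1..k. y (p i)) = y (p (k+1))"
      using y unfolding F'_def l_def by auto
    have mu: "\<mu> y q = y (r q)" for q unfolding \<mu>_def ..
    have rp: "r (p i) = p i" if "i \<in> {1..k+1}" for i using pnot[OF that] r_def by simp
    have rp': "r (p' i) = p i" if "i \<in> {1..k+1}" for i
      using that fstp[OF that] unfolding r_def I_def by auto
    have c1: "\<forall>q. q \<notin> (\<Union>i\<le>l+1. Y i) \<longrightarrow> \<mu> y q = 0"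
    proof (intro allI impI)
      fix q assume q: "q \<notin> (\<Union>i\<le>l+1. Y i)"
      have "q \<notin> p' ` I"
      proof
        assume "q \<in> p' ` I"
        then obtain i where "i \<in> I" "q = p' i" by auto
        then show False using q pYi I1 k l_def by fastforce
      qed
      then have "r q = q" using r_def by simp
      moreover have "q \<notin> (\<Union>i\<le>l+1. Y'' i)" using q Y''Y by blast
      moreover have "\<forall>q. q \<notin> (\<Union>i\<le>l+1. Y'' i) \<longrightarrow> y q = 0"
        using yC unfolding COP_def by blast
      ultimately have "y q = 0" "r q = q" by blast+
      then show "\<mu> y q = 0" unfolding mu by simp
    qed
    have y2: "\<forall>q\<in>Y'' 0. y q = 0" and y3: "\<forall>q\<in>Y'' (l+1). y q = 1"
      and y4: "\<forall>i\<le>k. \<forall>q\<in>Y'' i. 0 \<le> y q"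
      and y5: "\<forall>i. k + 1 \<le> i \<and> i \<le> l \<longrightarrow> (\<forall>a\<in>Y'' i. \<forall>b\<in>Y'' (i+1). y a \<le> y b)"
      and y6: "\<forall>q b. (\<forall>i\<in>{1..k}. q i \<in> Y'' i) \<and> b \<in> Y'' (k+1) \<longrightarrow> (\<Sum>i=1..k. y (q i)) \<le> y b"
      using yC unfolding COP_def by blast+
    have c2: "\<forall>q\<in>Y 0. \<mu> y q = 0" unfolding mu using y2 R by blast
    have c3: "\<forall>q\<in>Y (l+1). \<mu> y q = 1" unfolding mu using y3 R by blast
    have c4: "\<forall>i\<le>k. \<forall>q\<in>Y i. 0 \<le> \<mu> y q" unfolding mu using y4 R by blast
    have c5: "\<forall>i. k + 1 \<le> i \<and> i \<le> l \<longrightarrow> (\<forall>a\<in>Y i. \<forall>b\<in>Y (i+1). \<mu> y a \<le> \<mu> y b)"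
      unfolding mu using y5 R by blast
    have c6: "(\<Sum>i=1..k. \<mu> y (q i)) \<le> \<mu> y b"
      if "\<forall>i\<in>{1..k}. q i \<in> Y i" "b \<in> Y (k+1)" for q b
    proof -
      have "(\<forall>i\<in>{1..k}. (r \<circ> q) i \<in> Y'' i) \<and> r b \<in> Y'' (k+1)"
        using that R by auto
      then have "(\<Sum>i=1..k. y ((r \<circ> q) i)) \<le> y (r b)"
        using y6 by blast
      then show ?thesis by (simp add: mu)
    qed
    have e1': "(\<Sum>i=1..k. \<mu> y (p i)) = \<mu> y (p (k+1))"
    proof -
      have "(\<Sum>i=1..k. \<mu> y (p i)) = (\<Sum>i=1..k. y (p i))"
        by (rule sum.cong) (use rp mu in auto)
      moreover have "\<mu> y (p (k+1)) = y (p (k+1))" using rp mu by auto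
      ultimately show ?thesis using e1 by simp
    qed
    have e2': "(\<Sum>i=1..k. \<mu> y (p' i)) = \<mu> y (p' (k+1))"
    proof -
      have "(\<Sum>i=1..k. \<mu> y (p' i)) = (\<Sum>i=1..k. y (p i))"
        by (rule sum.cong) (use rp' mu in auto)
      moreover have "\<mu> y (p' (k+1)) = y (p (k+1))" using rp' mu by auto
      ultimately show ?thesis using e1 by simp
    qed
    show ?thesis unfolding F_def COP_def l_def[symmetric] Y_def[symmetric]
      using c1 c2 c3 c4 c5 c6 e1' e2' by blast
  qed
  have D: "\<nu> (\<mu> y) = y" if y: "y \<in> F'" for y
  proof
    fix q
    show "\<nu> (\<mu> y) q = y q"
    proof (cases "q \<in> p' ` I")
      case True
      then have "q \<notin> (\<Union>i\<le>l+1. Y'' i)" using Y''Y by blast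
      moreover have "\<forall>q. q \<notin> (\<Union>i\<le>l+1. Y'' i) \<longrightarrow> y q = 0"
        using y unfolding F'_def COP_def l_def by blast
      ultimately have "y q = 0" by blast
      then show ?thesis using True \<nu>_def by simp
    next
      case False
      then show ?thesis unfolding \<nu>_def \<mu>_def r_def by simp
    qed
  qed
  have E: "\<mu> (\<nu> x) = x" if x: "x \<in> F" for x
  proof
    fix q
    show "\<mu> (\<nu> x) q = x q"
    proof (cases "q \<in> p' ` I")
      case True
      then obtain i where i: "i \<in> I" "q = p' i" by auto
      then have i1: "i \<in> {1..k+1}" using I1 by auto
      have "\<mu> (\<nu> x) q = \<nu> x (p i)" unfolding \<mu>_def r_def using True i fstp[OF i1] by simp
      also have "\<dots> = x (p i)" using pnot[OF i1] \<nu>_def by simp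
      also have "\<dots> = x q" using A[OF x i(1)] i by simp
      finally show ?thesis .
    next
      case False
      then show ?thesis unfolding \<nu>_def \<mu>_def r_def by simp
    qed
  qed
  have bij: "bij_betw \<nu> F F'"
    by (rule bij_betw_byWitness[of _ \<mu>]) (use B C D E in auto)
  have dim: "faff_dim F = faff_dim F'"
    by (rule faff_eq[OF lin\<nu> lin\<mu>]) (use B C D E in auto)
  have sum: "int (sum_list \<tau>') + int (card I) = int (sum_list \<tau>)"
  proof -
    have tnz: "\<tau> ! j > 0" if "j < l" for j using pos that l_def by simp
    have tnz': "int (\<tau> ! j - Suc 0) = int (\<tau> ! j) - 1" if "j < l" for j
      using tnz[OF that] by (cases "\<tau> ! j") auto
    have s1: "int (sum_list \<tau>') = (\<Sum>j\<in>{0..<l}. int (\<tau>!j) - (if j+1 \<in> I then 1 else 0))"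
      unfolding \<tau>'_def interv_sum_list_conv_sum_set_nat l_def[symmetric] of_nat_sum
      by (rule sum.cong) (use tnz' in auto)
    have s2: "int (sum_list \<tau>) = (\<Sum>j\<in>{0..<l}. int (\<tau>!j))"
      unfolding sum_list_sum_nth l_def of_nat_sum by simp
    have s3: "(\<Sum>j\<in>{0..<l}. (if j+1 \<in> I then 1 else 0::int)) = int (card {j\<in>{0..<l}. j+1 \<in> I})"
      by (simp add: sum.If_cases Int_def conj_commute)
    have "I = Suc ` {j\<in>{0..<l}. j+1 \<in> I}"
    proof
      show "I \<subseteq> Suc ` {j\<in>{0..<l}. j+1 \<in> I}"
      proof
        fix i assume "i \<in> I"
        then have "i \<in> {1..l}" using Il by auto
        then show "i \<in> Suc ` {j\<in>{0..<l}. j+1 \<in> I}" using \<open>i \<in> I\<close>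
          by (intro image_eqI[of _ _ "i - 1"]) auto
      qed
    qed auto
    then have "card I = card {j\<in>{0..<l}. j+1 \<in> I}"
      by (metis card_image inj_Suc inj_on_subset subset_UNIV)
    then show ?thesis using s1 s2 s3 by (simp add: sum_subtractf)
  qed
  show ?thesis using lin\<nu> bij dim sum by simp
qed

end
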